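(* Let $E$ be the elliptic curve $Y^2+11Y=X^3+11X^2+33X$ over $\mathbb{Q}$ and $t=Y-\frac{11}{X}$. For every point $P=(x,y)\in E(\mathbb{Q})$ with $x\neq 0$, we have $H_X(P)\le 7\,H_t(P)^{2/3}$, i.e. $h_X(P)\le \tfrac23 h_t(P)+\log 7$. More precisely, for every finite prime $p$, $\max(1,|x|_p)\le \max(1,|y-\tfrac{11}{x}|_p)^{2/3}$, and at the archimedean place $\max(1,|x|)\le 7\max(1,|y-\tfrac{11}{x}|)^{2/3}$.
   Context: For a non-constant function $f$ on $E$ and $P\in E(\mathbb{Q})$ with $f(P)$ finite, $H_f(P)=\prod_{p\le\infty}\max(1,|f(P)|_p)$ and $h_f(P)=\log H_f(P)$. *)

theory Defs
  imports Complex_Main "HOL-Computational_Algebra.Primes"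
begin

definition padic_val_rat :: "nat \<Rightarrow> rat \<Rightarrow> int" where
  "padic_val_rat p q = (case quotient_of q of (a, b) \<Rightarrow>
      int (multiplicity (int p) a) - int (multiplicity (int p) b))"

definition padic_abs :: "nat \<Rightarrow> rat \<Rightarrow> real" where
  "padic_abs p q = (if q = 0 then 0 else real p powr (- real_of_int (padic_val_rat p q)))"

text \<open>Multiplicative height of a rational value f(P):
  H = prod over all places p (finite primes and infinity) of max(1, |f(P)|_p).\<close>
definition height_rat :: "rat \<Rightarrow> real" where
  "height_rat q = max 1 \<bar>real_of_rat q\<bar> *
     (\<Prod>p \<in> {p::nat. prime p \<and> max 1 (padic_abs p q) \<noteq> 1}. max 1 (padic_abs p q))"

definition on_E :: "rat \<Rightarrow> rat \<Rightarrow> bool" where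
  "on_E x y \<longleftrightarrow> y^2 + 11 * y = x^3 + 11 * x^2 + 33 * x"

end

theory Submission
  imports Defs
begin

lemma pv_frac:
  assumes p: "prime p" and c: "c \<noteq> 0" and d: "d \<noteq> 0"
  shows "padic_val_rat p (of_int c / of_int d) = int (multiplicity (int p) c) - int (multiplicity (int p) d)"
proof -
  obtain a b where ab: "quotient_of (of_int c / of_int d) = (a, b)" by fastforce
  have q: "of_int c / of_int d = (of_int a / of_int b :: rat)" using quotient_of_div[OF ab] .
  have b: "b > 0" using quotient_of_denom_pos[OF ab] .
  have "(of_int c * of_int b :: rat) = of_int a * of_int d" using q b d
    by (simp add: field_simps)
  hence e: "c * b = a * d" by (metis of_int_eq_iff of_int_mult)
  have a: "a \<noteq> 0" using e c b d by auto
  have pe: "prime_elem (int p)" using p by simp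
  have "multiplicity (int p) (c*b) = multiplicity (int p) (a*d)" using e by simp
  hence "multiplicity (int p) c + multiplicity (int p) b = multiplicity (int p) a + multiplicity (int p) d"
    using prime_elem_multiplicity_mult_distrib[OF pe] a b c d by simp
  thus ?thesis unfolding padic_val_rat_def ab by simp
qed

lemma pv_quot:
  assumes "quotient_of q = (a, b)"
  shows "padic_val_rat p q = int (multiplicity (int p) a) - int (multiplicity (int p) b)"
  using assms unfolding padic_val_rat_def by simp

lemma fin_S: "finite {p::nat. prime p \<and> max 1 (padic_abs p q) \<noteq> 1}"
proof -
  obtain a b where ab: "quotient_of q = (a, b)" by fastforce
  have b: "b > 0" using quotient_of_denom_pos[OF ab] .
  have "{p::nat. prime p \<and> max 1 (padic_abs p q) \<noteq> 1} \<subseteq> {..nat b}"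
  proof
    fix p assume "p \<in> {p::nat. prime p \<and> max 1 (padic_abs p q) \<noteq> 1}"
    hence p: "prime p" and ne: "max 1 (padic_abs p q) \<noteq> 1" by auto
    have "int p dvd b"
    proof (rule ccontr)
      assume "\<not> int p dvd b"
      hence "multiplicity (int p) b = 0" by (rule not_dvd_imp_multiplicity_0)
      hence "padic_val_rat p q \<ge> 0" using pv_quot[OF ab] by simp
      moreover have "real p \<ge> 1" using p prime_ge_1_nat by auto
      ultimately have "real p powr (- real_of_int (padic_val_rat p q)) \<le> real p powr 0"
        by (intro powr_mono) auto
      hence "padic_abs p q \<le> 1" unfolding padic_abs_def using \<open>real p \<ge> 1\<close> by auto
      thus False using ne by simp
    qed
    hence "int p \<le> b" using b zdvd_imp_le by blast
    thus "p \<in> {..nat b}" by simp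
  qed
  thus ?thesis using finite_subset by blast
qed

lemma abs_le1:
  assumes p: "prime p" and ab: "quotient_of q = (a, b)" and nd: "\<not> int p dvd b"
  shows "padic_abs p q \<le> 1"
proof -
  have "multiplicity (int p) b = 0" using nd by (rule not_dvd_imp_multiplicity_0)
  hence "padic_val_rat p q \<ge> 0" using pv_quot[OF ab] by simp
  moreover have "real p \<ge> 1" using p prime_ge_1_nat by auto
  ultimately have "real p powr (- real_of_int (padic_val_rat p q)) \<le> real p powr 0"
    by (intro powr_mono) auto
  thus "padic_abs p q \<le> 1" unfolding padic_abs_def using \<open>real p \<ge> 1\<close> by auto
qed

lemma local_p:
  assumes E: "on_E x y" and x0: "x \<noteq> 0" and p: "prime p"
  shows "max 1 (padic_abs p x) \<le> max 1 (padic_abs p (y - 11 / x)) powr (2/3)"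
proof -
  obtain a b where ab: "quotient_of x = (a, b)" by fastforce
  obtain c d where cd: "quotient_of y = (c, d)" by fastforce
  have b: "b > 0" using quotient_of_denom_pos[OF ab] .
  have d: "d > 0" using quotient_of_denom_pos[OF cd] .
  have xab: "x = of_int a / of_int b" using quotient_of_div[OF ab] .
  have ycd: "y = of_int c / of_int d" using quotient_of_div[OF cd] .
  have cab: "coprime a b" using quotient_of_coprime[OF ab] .
  have ccd: "coprime c d" using quotient_of_coprime[OF cd] .
  have a0: "a \<noteq> 0" using x0 xab by auto
  have pi: "prime (int p)" using p by simp
  have pe: "prime_elem (int p)" using p by simp
  have ge1: "1 \<le> max 1 (padic_abs p (y - 11 / x)) powr (2/3)"
    by (simp add: ge_one_powr_ge_zero)
  show ?thesis
  proof (cases "int p dvd b")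
    case False
    then show ?thesis using abs_le1[OF p ab False] ge1 by simp
  next
    case True
    have pna: "\<not> int p dvd a"
    proof
      assume "int p dvd a"
      hence "is_unit (int p)" using coprime_common_divisor[OF cab _ True] by blast
      thus False using pi not_prime_unit by blast
    qed
    define A where "A = a^3 + 11*a^2*b + 33*a*b^2"
    have cy: "of_int c = y * of_int d" and ax': "of_int a = x * of_int b" using xab ycd b d by auto
    have "(of_int c^2 + 11*of_int c*of_int d) * of_int b^3 = (y^2 + 11*y) * (of_int b^3 * of_int d^2 :: rat)"
      unfolding cy by (simp add: power2_eq_square power3_eq_cube algebra_simps)
    also have "\<dots> = (x^3 + 11*x^2 + 33*x) * (of_int b^3 * of_int d^2)"
      using E unfolding on_E_def by simp
    also have "\<dots> = (of_int A :: rat) * of_int d^2"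
      unfolding A_def of_int_add of_int_mult of_int_power of_int_numeral ax'
      by (simp add: power2_eq_square power3_eq_cube algebra_simps)
    finally have "of_int (c*(c + 11*d) * b^3) = (of_int (A * d^2) :: rat)"
      by (simp add: power2_eq_square algebra_simps)
    hence eq: "c*(c + 11*d) * b^3 = A * d^2" by (rule of_int_eq_iff[THEN iffD1])
    have pnA: "\<not> int p dvd A"
    proof
      assume "int p dvd A"
      moreover have "int p dvd 11*a^2*b + 33*a*b^2" using True
        by (intro dvd_add) (simp_all add: power2_eq_square)
      ultimately have "int p dvd A - (11*a^2*b + 33*a*b^2)" by (rule dvd_diff)
      hence "int p dvd a^3" unfolding A_def by simp
      thus False using pna pi prime_dvd_power by blast
    qed
    have "int p dvd A * d^2" unfolding eq[symmetric] using True by (simp add: power3_eq_cube)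
    hence "int p dvd A \<or> int p dvd d^2" using pi prime_dvd_multD by blast
    hence pd: "int p dvd d" using pnA pi prime_dvd_power by blast
    have pnc: "\<not> int p dvd c"
    proof
      assume "int p dvd c"
      hence "is_unit (int p)" using coprime_common_divisor[OF ccd _ pd] by blast
      thus False using pi not_prime_unit by blast
    qed
    have pnc11: "\<not> int p dvd c + 11*d"
    proof
      assume "int p dvd c + 11*d"
      moreover have "int p dvd 11*d" using pd by simp
      ultimately have "int p dvd (c + 11*d) - 11*d" by (rule dvd_diff)
      thus False using pnc by simp
    qed
    have c0: "c \<noteq> 0" using pnc by auto
    have c110: "c + 11*d \<noteq> 0" using pnc11 by auto
    have A0: "A \<noteq> 0" using pnA by auto
    have "multiplicity (int p) (c*(c + 11*d) * b^3) = 3 * multiplicity (int p) b"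
      using c0 c110 b pnc pnc11
      by (simp add: prime_elem_multiplicity_mult_distrib[OF pe] prime_elem_multiplicity_power_distrib[OF pe]
            not_dvd_imp_multiplicity_0)
    moreover have "multiplicity (int p) (A * d^2) = 2 * multiplicity (int p) d"
      using A0 d pnA
      by (simp add: prime_elem_multiplicity_mult_distrib[OF pe] prime_elem_multiplicity_power_distrib[OF pe]
            not_dvd_imp_multiplicity_0)
    ultimately have 32: "3 * multiplicity (int p) b = 2 * multiplicity (int p) d" using eq by simp
    define N where "N = c*a - 11*b*d"
    have tN: "y - 11 / x = of_int N / of_int (d*a)"
      unfolding N_def xab ycd using a0 b d by (simp add: field_simps)
    have pnN: "\<not> int p dvd N"
    proof
      assume "int p dvd N"
      moreover have "int p dvd 11*b*d" using True by simp
      ultimately have "int p dvd N + 11*b*d" by (rule dvd_add)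
      hence "int p dvd c*a" unfolding N_def by simp
      thus False using pna pnc pi prime_dvd_mult_iff by blast
    qed
    have N0: "N \<noteq> 0" using pnN by auto
    have t0: "y - 11 / x \<noteq> 0" using tN N0 a0 d by simp
    have vt: "padic_val_rat p (y - 11/x) = - int (multiplicity (int p) d)"
      unfolding tN using pv_frac[OF p N0, of "d*a"] a0 d pnN pna
      by (simp add: prime_elem_multiplicity_mult_distrib[OF pe] not_dvd_imp_multiplicity_0)
    have vx: "padic_val_rat p x = - int (multiplicity (int p) b)"
      using pv_quot[OF ab] pna by (simp add: not_dvd_imp_multiplicity_0)
    have p1: "real p \<ge> 1" using p prime_ge_1_nat by auto
    define B where "B = multiplicity (int p) b"
    define D where "D = multiplicity (int p) d"
    have ax: "padic_abs p x = real p powr real B"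
      unfolding padic_abs_def B_def using x0 vx by simp
    have at: "padic_abs p (y - 11/x) = real p powr real D"
      unfolding padic_abs_def D_def using t0 vt by simp
    have g1: "real p powr real B \<ge> 1" "real p powr real D \<ge> 1" using p1 by (auto simp: ge_one_powr_ge_zero)
    have "(real p powr real D) powr (2/3) = real p powr real B"
    proof -
      have "real (3*B) = real (2*D)" using 32 unfolding B_def D_def by (rule arg_cong)
      hence "3 * real B = 2 * real D" by simp
      hence "real D * (2/3) = real B" by linarith
      thus ?thesis by (simp add: powr_powr)
    qed
    thus ?thesis using ax at g1 by simp
  qed
qed

lemma arch_real:
  fixes u w :: real
  assumes E: "w^2 + 11*w = u^3 + 11*u^2 + 33*u" and u0: "u \<noteq> 0"
  shows "max 1 \<bar>u\<bar> \<le> 7 * max 1 \<bar>w - 11/u\<bar> powr (2/3)"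
proof -
  define t where "t = w - 11/u"
  have ge1: "1 \<le> max 1 \<bar>t\<bar> powr (2/3)" by (simp add: ge_one_powr_ge_zero)
  show ?thesis
  proof (cases "\<bar>u\<bar> \<le> 7")
    case True
    then show ?thesis using ge1 unfolding t_def[symmetric] by simp
  next
    case False
    define s where "s = w + 11/2"
    have s2: "s^2 = u^3 + 11*u^2 + 33*u + 121/4" unfolding s_def using E
      by (simp add: power2_eq_square power3_eq_cube algebra_simps)
    have f: "u^3 + 11*u^2 + 33*u + 121/4 = (u+7)*((u+2)^2+1) - 19/4"
      by (simp add: power2_eq_square power3_eq_cube algebra_simps)
    have u7: "u > 7"
    proof (rule ccontr)
      assume "\<not> u > 7"
      hence "u < -7" using False by auto
      hence "(u+7)*((u+2)^2+1) \<le> 0" by (intro mult_nonpos_nonneg) auto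
      moreover have "s^2 \<ge> 0" by simp
      ultimately show False using s2 f by linarith
    qed
    have "11*u^2 + 33*u \<ge> 0" using u7 by simp
    hence s3: "s^2 \<ge> u^3 + 25" using s2 by linarith
    have "u^3 \<ge> 7^3" using u7 by (intro power_mono) auto
    hence "s^2 \<ge> 18^2" using s3 by simp
    hence sa: "\<bar>s\<bar> \<ge> 18" using abs_le_square_iff[of 18 s] by simp
    have "\<bar>11/u\<bar> \<le> 2" using u7 by (simp add: field_simps)
    hence h2: "\<bar>11/2 + 11/u\<bar> \<le> 15/2" by linarith
    have "s = t + (11/2 + 11/u)" unfolding t_def s_def by simp
    hence "\<bar>s\<bar> \<le> \<bar>t\<bar> + \<bar>11/2 + 11/u\<bar>" by (metis abs_triangle_ineq)
    hence "\<bar>t\<bar> \<ge> \<bar>s\<bar> - 15/2" using h2 by linarith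
    moreover have "\<bar>s\<bar> - 15/2 \<ge> \<bar>s\<bar>/4" using sa by simp
    ultimately have ta: "\<bar>t\<bar> \<ge> \<bar>s\<bar>/4" by simp
    hence "(\<bar>s\<bar>/4)^2 \<le> \<bar>t\<bar>^2" by (intro power_mono) auto
    hence "t^2 \<ge> s^2/16" by (simp add: power_divide)
    moreover have "(u/7)^3 = u^3/343" by (simp add: power_divide)
    moreover have "u^3 > 0" using u7 by simp
    hence "u^3/343 \<le> s^2/16" using s3 by linarith
    ultimately have t2: "t^2 \<ge> (u/7)^3" by linarith
    define z where "z = \<bar>t\<bar> powr (2/3)"
    have tpos: "\<bar>t\<bar> > 0" using ta sa by simp
    have zpos: "z > 0" unfolding z_def using tpos by simp
    have "z^3 = z powr (real 3)" using zpos by (rule powr_realpow[symmetric])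
    also have "\<dots> = \<bar>t\<bar> powr ((2/3) * real 3)" unfolding z_def by (simp add: powr_powr)
    also have "\<dots> = \<bar>t\<bar> powr (real 2)" by simp
    also have "\<dots> = \<bar>t\<bar>^2" using tpos by (rule powr_realpow)
    finally have "z^3 \<ge> (u/7)^3" using t2 by simp
    hence "(u/7)^Suc 2 \<le> z^Suc 2" by (simp add: numeral_3_eq_3)
    hence "z \<ge> u/7" by (rule power_le_imp_le_base) (use zpos in simp)
    moreover have "max 1 \<bar>t\<bar> powr (2/3) \<ge> z" unfolding z_def by (intro powr_mono2) auto
    ultimately show ?thesis using u7 unfolding t_def[symmetric] by simp
  qed
qed

lemma arch:
  assumes E: "on_E x y" and x0: "x \<noteq> 0"
  shows "max 1 \<bar>real_of_rat x\<bar> \<le> 7 * max 1 \<bar>real_of_rat (y - 11 / x)\<bar> powr (2/3)"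
proof -
  have "real_of_rat (y^2 + 11*y) = real_of_rat (x^3 + 11*x^2 + 33*x)" using E unfolding on_E_def by simp
  hence "(real_of_rat y)^2 + 11*real_of_rat y = (real_of_rat x)^3 + 11*(real_of_rat x)^2 + 33*real_of_rat x"
    by (simp add: of_rat_add of_rat_mult of_rat_power)
  moreover have "real_of_rat (y - 11/x) = real_of_rat y - 11 / real_of_rat x"
    by (simp add: of_rat_diff of_rat_divide)
  ultimately show ?thesis using arch_real[of "real_of_rat y" "real_of_rat x"] x0 by simp
qed

theorem mainTheorem5:
  fixes x y :: rat
  assumes "on_E x y" and "x \<noteq> 0"
  shows "height_rat x \<le> 7 * height_rat (y - 11 / x) powr (2/3)
       \<and> (\<forall>p::nat. prime p \<longrightarrow>
            max 1 (padic_abs p x) \<le> max 1 (padic_abs p (y - 11 / x)) powr (2/3))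
       \<and> max 1 \<bar>real_of_rat x\<bar> \<le> 7 * max 1 \<bar>real_of_rat (y - 11 / x)\<bar> powr (2/3)"
proof -
  define t where "t = y - 11 / x"
  have loc: "\<And>p. prime p \<Longrightarrow> max 1 (padic_abs p x) \<le> max 1 (padic_abs p t) powr (2/3)"
    unfolding t_def using local_p assms by blast
  have ar: "max 1 \<bar>real_of_rat x\<bar> \<le> 7 * max 1 \<bar>real_of_rat t\<bar> powr (2/3)"
    unfolding t_def using arch assms by blast
  define Sx where "Sx = {p::nat. prime p \<and> max 1 (padic_abs p x) \<noteq> 1}"
  define St where "St = {p::nat. prime p \<and> max 1 (padic_abs p t) \<noteq> 1}"
  have fSt: "finite St" unfolding St_def by (rule fin_S)
  have sub: "Sx \<subseteq> St"
  proof
    fix p assume "p \<in> Sx"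
    hence p: "prime p" and "max 1 (padic_abs p x) \<noteq> 1" unfolding Sx_def by auto
    hence "1 < max 1 (padic_abs p x)" by linarith
    hence "1 < max 1 (padic_abs p t) powr (2/3)" using loc[OF p] by linarith
    hence "max 1 (padic_abs p t) \<noteq> 1" by auto
    thus "p \<in> St" using p unfolding St_def by auto
  qed
  have "(\<Prod>p\<in>Sx. max 1 (padic_abs p x)) \<le> (\<Prod>p\<in>Sx. max 1 (padic_abs p t) powr (2/3))"
    using sub loc unfolding Sx_def by (intro prod_mono) auto
  also have "\<dots> \<le> (\<Prod>p\<in>St. max 1 (padic_abs p t) powr (2/3))"
    using fSt sub by (intro prod_mono2) (auto simp: ge_one_powr_ge_zero)
  also have "\<dots> = (\<Prod>p\<in>St. max 1 (padic_abs p t)) powr (2/3)"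
    by (simp add: prod_powr_distrib)
  finally have pr: "(\<Prod>p\<in>Sx. max 1 (padic_abs p x)) \<le> (\<Prod>p\<in>St. max 1 (padic_abs p t)) powr (2/3)" .
  have "height_rat x = max 1 \<bar>real_of_rat x\<bar> * (\<Prod>p\<in>Sx. max 1 (padic_abs p x))"
    unfolding height_rat_def Sx_def ..
  also have "\<dots> \<le> (7 * max 1 \<bar>real_of_rat t\<bar> powr (2/3)) * (\<Prod>p\<in>St. max 1 (padic_abs p t)) powr (2/3)"
    using ar pr by (intro mult_mono) (auto intro: prod_nonneg)
  also have "\<dots> = 7 * (max 1 \<bar>real_of_rat t\<bar> * (\<Prod>p\<in>St. max 1 (padic_abs p t))) powr (2/3)"
    by (simp add: powr_mult prod_nonneg)
  also have "\<dots> = 7 * height_rat t powr (2/3)"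
    unfolding height_rat_def St_def ..
  finally show ?thesis using loc ar unfolding t_def by blast
qed

end
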